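(* Let $X$ be any space and let $A$ be a homotopy cut-set for paths $\alpha,\beta:[0,1]\to X$ such that $\alpha(A)\subseteq X\setminus\mathbf{aw}(X)$. Then $\alpha\simeq\beta$.
   Context: $\simeq$ is path-homotopy. A loop is trivial if path-homotopic to a constant loop. A sequence of loops $\alpha_n$ based at $x$ is a null-sequence if every neighborhood of $x$ contains $\alpha_n([0,1])$ for all but finitely many $n$. $\mathbf{aw}(X)=\{x\in X\mid \text{there is a null-sequence of non-trivial loops based at }x\}$. For paths $\alpha,\beta:[s,t]\to X$, a set $A\subseteq[s,t]$ is a homotopy cut-set for $\alpha,\beta$ if $A$ is closed, nowhere dense, contains $\{s,t\}$, $\alpha|_A=\beta|_A$, and $\alpha|_{[a,b]}\simeq\beta|_{[a,b]}$ for every component $(a,b)$ of $[s,t]\setminus A$. *)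

theory Defs
  imports "HOL-Analysis.Analysis"
begin

definition path_homotopic_on :: "'a topology \<Rightarrow> real \<Rightarrow> real \<Rightarrow> (real \<Rightarrow> 'a) \<Rightarrow> (real \<Rightarrow> 'a) \<Rightarrow> bool" where
  "path_homotopic_on X a b p q \<longleftrightarrow>
     homotopic_with (\<lambda>h. h a = p a \<and> h b = p b) (subtopology euclideanreal {a..b}) X p q"

definition trivial_loop :: "'a topology \<Rightarrow> 'a \<Rightarrow> (real \<Rightarrow> 'a) \<Rightarrow> bool" where
  "trivial_loop X x \<alpha> \<longleftrightarrow> path_homotopic_on X 0 1 \<alpha> (\<lambda>_. x)"

definition aw :: "'a topology \<Rightarrow> 'a set" where
  "aw X = {x \<in> topspace X. \<exists>\<alpha> :: nat \<Rightarrow> real \<Rightarrow> 'a.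
      (\<forall>n. pathin X (\<alpha> n) \<and> \<alpha> n 0 = x \<and> \<alpha> n 1 = x \<and> \<not> trivial_loop X x (\<alpha> n)) \<and>
      (\<forall>U. openin X U \<and> x \<in> U \<longrightarrow> (\<forall>\<^sub>F n in sequentially. \<alpha> n ` {0..1} \<subseteq> U))}"

definition homotopy_cut_set ::
  "'a topology \<Rightarrow> real \<Rightarrow> real \<Rightarrow> (real \<Rightarrow> 'a) \<Rightarrow> (real \<Rightarrow> 'a) \<Rightarrow> real set \<Rightarrow> bool" where
  "homotopy_cut_set X s t \<alpha> \<beta> A \<longleftrightarrow>
     A \<subseteq> {s..t} \<and> closed A \<and> interior (closure A) = {} \<and> s \<in> A \<and> t \<in> A \<and>
     (\<forall>x\<in>A. \<alpha> x = \<beta> x) \<and>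
     (\<forall>a b. a < b \<and> {a<..<b} \<in> components ({s..t} - A) \<longrightarrow> path_homotopic_on X a b \<alpha> \<beta>)"

end

theory Submission
  imports Defs
begin

lemma phom_iff:
  assumes "a \<le> b"
  shows "path_homotopic_on X a b p q \<longleftrightarrow>
    (\<exists>h. continuous_map (top_of_set ({0..1::real}\<times>{a..b})) X h \<and>
      (\<forall>x\<in>{a..b}. h(0,x) = p x) \<and> (\<forall>x\<in>{a..b}. h(1,x) = q x) \<and>
      (\<forall>t\<in>{0..1}. h(t,a) = p a \<and> h(t,b) = p b))"
  unfolding path_homotopic_on_def
  apply (subst homotopic_with)
  using assms apply force
  using assms apply (simp)
  done

lemma glue:
  assumes ab: "a \<le> b" and bc: "b \<le> c"
    and h1: "path_homotopic_on X a b p q" and h2: "path_homotopic_on X b c p q"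
  shows "path_homotopic_on X a c p q"
proof -
  obtain h where hc: "continuous_map (top_of_set ({0..1::real}\<times>{a..b})) X h"
    and h0: "\<forall>x\<in>{a..b}. h(0,x) = p x" and h1': "\<forall>x\<in>{a..b}. h(1,x) = q x"
    and he: "\<forall>t\<in>{0..1}. h(t,a) = p a \<and> h(t,b) = p b"
    using h1 ab unfolding phom_iff[OF ab] by blast
  obtain k where kc: "continuous_map (top_of_set ({0..1::real}\<times>{b..c})) X k"
    and k0: "\<forall>x\<in>{b..c}. k(0,x) = p x" and k1': "\<forall>x\<in>{b..c}. k(1,x) = q x"
    and ke: "\<forall>t\<in>{0..1}. k(t,b) = p b \<and> k(t,c) = p c"
    using h2 bc unfolding phom_iff[OF bc] by blast
  let ?T = "top_of_set ({0..1::real}\<times>{a..c::real})"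
  have "continuous_map ?T X (\<lambda>x. if snd x \<le> b then h x else k x)"
  proof (rule continuous_map_cases_le)
    show "continuous_map ?T euclideanreal snd"
      by (simp add: continuous_on_snd continuous_on_id)
    show "continuous_map ?T euclideanreal (\<lambda>x. b)" by simp
    have "subtopology ?T {x \<in> topspace ?T. snd x \<le> b} = top_of_set ({0..1}\<times>{a..b})"
      unfolding subtopology_subtopology using ab bc by (intro arg_cong[where f="subtopology euclidean"]) auto
    then show "continuous_map (subtopology ?T {x \<in> topspace ?T. snd x \<le> b}) X h"
      using hc by simp
    have "subtopology ?T {x \<in> topspace ?T. b \<le> snd x} = top_of_set ({0..1}\<times>{b..c})"
      unfolding subtopology_subtopology using ab bc by (intro arg_cong[where f="subtopology euclidean"]) auto
    then show "continuous_map (subtopology ?T {x \<in> topspace ?T. b \<le> snd x}) X k"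
      using kc by simp
    show "\<And>x. x \<in> topspace ?T \<Longrightarrow> snd x = b \<Longrightarrow> h x = k x"
      using he ke by auto
  qed
  moreover have "\<forall>x\<in>{a..c}. (if snd (0::real,x) \<le> b then h (0,x) else k (0,x)) = p x"
    using h0 k0 by auto
  moreover have "\<forall>x\<in>{a..c}. (if snd (1::real,x) \<le> b then h (1,x) else k (1,x)) = q x"
    using h1' k1' by auto
  moreover have "\<forall>t\<in>{0..1::real}. (if snd (t,a) \<le> b then h (t,a) else k (t,a)) = p a \<and>
      (if snd (t,c) \<le> b then h (t,c) else k (t,c)) = p c"
    using he ke ab bc by auto
  ultimately show ?thesis
    unfolding phom_iff[OF order_trans[OF ab bc]] by blast
qed

definition loopL :: "(real \<Rightarrow> 'a) \<Rightarrow> (real \<Rightarrow> 'a) \<Rightarrow> real \<Rightarrow> real \<Rightarrow> real \<Rightarrow> 'a" where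
  "loopL p q t s = (\<lambda>u. if u \<le> 1/2 then p (t + 2*u*(s-t)) else q (t + (2-2*u)*(s-t)))"

lemma loop_triv:
  assumes t01: "t \<in> {0..1}" and s01: "s \<in> {0..1}" and ts: "t \<noteq> s"
    and eqt: "p t = q t" and eqs: "p s = q s"
    and triv: "trivial_loop X (p t) (loopL p q t s)"
  shows "path_homotopic_on X (min t s) (max t s) p q"
proof -
  define a where "a = min t s"
  define b where "b = max t s"
  have ab: "a \<le> b" unfolding a_def b_def by simp
  let ?L = "loopL p q t s"
  have L0: "?L 0 = p t" by (simp add: loopL_def)
  have L1: "?L 1 = p t" using eqt by (simp add: loopL_def)
  obtain H where Hc: "continuous_map (top_of_set ({0..1::real}\<times>{0..1})) X H"
    and H0: "\<forall>x\<in>{0..1}. H(0,x) = ?L x" and H1: "\<forall>x\<in>{0..1}. H(1,x) = p t"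
    and He: "\<forall>v\<in>{0..1}. H(v,0) = ?L 0 \<and> H(v,1) = ?L 1"
    using triv unfolding trivial_loop_def phom_iff[OF zero_le_one] by blast
  define b1 :: "real \<Rightarrow> real" where "b1 v = min 1 (min (3 * v) (3 - 3 * v))" for v
  define b2 :: "real \<Rightarrow> real" where "b2 v = max 0 (min 1 (3 * v - 1))" for v
  define l :: "real \<Rightarrow> real" where "l r = (r-t)/(s-t)" for r
  define \<Phi> where "\<Phi> x = ((1 - l (snd x)) * b1 (fst x), (1 - l (snd x)) * b2 (fst x) + l (snd x)/2)" for x
  have lrange: "0 \<le> l r \<and> l r \<le> 1" if "r \<in> {a..b}" for r
    using that ts unfolding l_def a_def b_def
    by (cases "t < s") (auto simp: zero_le_divide_iff divide_le_eq_1)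
  have b1r: "0 \<le> b1 v \<and> b1 v \<le> 1" if "v \<in> {0..1}" for v using that unfolding b1_def by auto
  have b2r: "0 \<le> b2 v \<and> b2 v \<le> 1" if "v \<in> {0..1}" for v using that unfolding b2_def by auto
  have Phi_in: "\<Phi> x \<in> {0..1}\<times>{0..1}" if xin: "x \<in> {0..1}\<times>{a..b}" for x
  proof -
    obtain v r where x: "x = (v,r)" and v: "v \<in> {0..1}" and r: "r \<in> {a..b}" using xin by (cases x) auto
    have l: "0 \<le> l r" "l r \<le> 1" using lrange[OF r] by auto
    have 1: "0 \<le> b1 v" "b1 v \<le> 1" "0 \<le> b2 v" "b2 v \<le> 1" using b1r[OF v] b2r[OF v] by auto
    have "(1 - l r) * b1 v \<le> 1" using l 1 by (intro mult_le_one) (use l 1 in auto)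
    moreover have "(1 - l r) * b2 v \<le> 1 - l r" using l 1 by (simp add: mult_left_le)
    ultimately show ?thesis using l 1 unfolding x \<Phi>_def by auto
  qed
  have Phi_c: "continuous_map (top_of_set ({0..1}\<times>{a..b})) (top_of_set ({0..1::real}\<times>{0..1::real})) \<Phi>"
  proof -
    have "continuous_on ({0..1}\<times>{a..b}) \<Phi>"
      unfolding \<Phi>_def l_def b1_def b2_def by (intro continuous_intros) (use ts in auto)
    then show ?thesis using Phi_in by (auto simp: continuous_map_in_subtopology)
  qed
  have Gc: "continuous_map (top_of_set ({0..1}\<times>{a..b})) X (H \<circ> \<Phi>)"
    using continuous_map_compose[OF Phi_c Hc] .
  have lt: "l t = 0" unfolding l_def by simp
  have ls: "l s = 1" unfolding l_def using ts by simp
  have lr: "t + l r * (s-t) = r" for r unfolding l_def using ts by simp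
  have G0: "(H \<circ> \<Phi>)(0,r) = p r" if r: "r \<in> {a..b}" for r
  proof -
    have "(H \<circ> \<Phi>)(0,r) = H(0, l r/2)" unfolding \<Phi>_def b1_def b2_def by simp
    also have "\<dots> = ?L (l r/2)" using H0 lrange[OF r] by auto
    also have "\<dots> = p (t + l r * (s-t))" using lrange[OF r] unfolding loopL_def by simp
    finally show ?thesis using lr by simp
  qed
  have G1: "(H \<circ> \<Phi>)(1,r) = q r" if r: "r \<in> {a..b}" for r
  proof -
    have "(H \<circ> \<Phi>)(1,r) = H(0, 1 - l r/2)" unfolding \<Phi>_def b1_def b2_def by (simp add: algebra_simps)
    also have "\<dots> = ?L (1 - l r/2)" using H0 lrange[OF r] by auto
    also have "\<dots> = q r"
    proof (cases "l r = 1")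
      case True
      then have "r = s" using lr[of r] by simp
      then show ?thesis using True eqs unfolding loopL_def by simp
    next
      case False
      then have "\<not> 1 - l r/2 \<le> 1/2" using lrange[OF r] by simp
      then show ?thesis using lr[of r] unfolding loopL_def by (simp add: algebra_simps)
    qed
    finally show ?thesis .
  qed
  have Gt: "(H \<circ> \<Phi>)(v,t) = p t" if v: "v \<in> {0..1}" for v
  proof -
    have "(H \<circ> \<Phi>)(v,t) = H(b1 v, b2 v)" unfolding \<Phi>_def by (simp add: lt)
    also have "\<dots> = p t"
    proof -
      consider "v \<le> 1/3" | "1/3 \<le> v \<and> v \<le> 2/3" | "2/3 \<le> v" by linarith
      then show ?thesis
      proof cases
        case 1 then have "b2 v = 0" unfolding b2_def by simp
        then show ?thesis using He b1r[OF v] L0 by auto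
      next
        case 2 then have "b1 v = 1" unfolding b1_def by simp
        then show ?thesis using H1 b2r[OF v] by auto
      next
        case 3 then have "b2 v = 1" unfolding b2_def using v by simp
        then show ?thesis using He b1r[OF v] L1 by auto
      qed
    qed
    finally show ?thesis .
  qed
  have Gs: "(H \<circ> \<Phi>)(v,s) = p s" if v: "v \<in> {0..1}" for v
  proof -
    have "(H \<circ> \<Phi>)(v,s) = H(0, 1/2)" unfolding \<Phi>_def by (simp add: ls)
    also have "\<dots> = ?L (1/2)" using H0 by auto
    also have "\<dots> = p s" unfolding loopL_def by simp
    finally show ?thesis .
  qed
  have "a \<in> {t,s}" "b \<in> {t,s}" unfolding a_def b_def by (auto simp: min_def max_def)
  then have "\<forall>v\<in>{0..1}. (H \<circ> \<Phi>)(v,a) = p a \<and> (H \<circ> \<Phi>)(v,b) = p b"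
    using Gt Gs by auto
  then have "path_homotopic_on X a b p q"
    unfolding phom_iff[OF ab] using Gc G0 G1 by blast
  then show ?thesis unfolding a_def b_def .
qed

lemma seg01:
  fixes t s w :: real
  assumes "t \<in> {0..1}" "s \<in> {0..1}" "w \<in> {0..1}"
  shows "t + w*(s-t) \<in> {0..1}" "\<bar>t + w*(s-t) - t\<bar> \<le> \<bar>s-t\<bar>"
proof -
  have "0 \<le> (1 - w) * t" "0 \<le> w * s" "(1 - w) * t \<le> 1 - w" "w * s \<le> w"
    using assms by (auto simp: mult_left_le mult_right_le_one_le)
  moreover have "t + w * (s - t) = (1 - w) * t + w * s" by (simp add: algebra_simps)
  ultimately show "t + w*(s-t) \<in> {0..1}" by auto
  have "\<bar>t + w*(s-t) - t\<bar> = w * \<bar>s-t\<bar>" using assms by (simp add: abs_mult)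
  also have "\<dots> \<le> \<bar>s-t\<bar>" using assms by (simp add: mult_left_le_one_le)
  finally show "\<bar>t + w*(s-t) - t\<bar> \<le> \<bar>s-t\<bar>" .
qed

lemma loop_path:
  assumes p: "pathin X p" and q: "pathin X q" and t: "t \<in> {0..1}" and s: "s \<in> {0..1}"
    and eqs: "p s = q s"
  shows "pathin X (loopL p q t s)"
proof -
  let ?T = "top_of_set {0..1::real}"
  have "continuous_map ?T X (\<lambda>u. if u \<le> 1/2 then p (t + 2*u*(s-t)) else q (t + (2-2*u)*(s-t)))"
  proof (rule continuous_map_cases_le)
    show "continuous_map ?T euclideanreal (\<lambda>u. u)" by simp
    show "continuous_map ?T euclideanreal (\<lambda>u. 1/2)" by simp
    have e1: "subtopology ?T {x \<in> topspace ?T. x \<le> 1/2} = top_of_set {0..1/2}"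
      unfolding subtopology_subtopology by (intro arg_cong[where f="subtopology euclidean"]) auto
    have "continuous_map (top_of_set {0..1/2}) ?T (\<lambda>u. t + 2*u*(s-t))"
    proof -
      have "t + 2*u*(s-t) \<in> {0..1}" if "u \<in> {0..1/2}" for u
        using seg01(1)[OF t s, of "2*u"] that by (simp add: mult.assoc)
      then show ?thesis by (auto simp: continuous_map_in_subtopology intro!: continuous_intros)
    qed
    then have "continuous_map (top_of_set {0..1/2}) X (p \<circ> (\<lambda>u. t + 2*u*(s-t)))"
      using p unfolding pathin_def by (rule continuous_map_compose)
    then show "continuous_map (subtopology ?T {x \<in> topspace ?T. x \<le> 1/2}) X (\<lambda>u. p (t + 2*u*(s-t)))"
      unfolding e1 by (simp add: o_def)
    have e2: "subtopology ?T {x \<in> topspace ?T. 1/2 \<le> x} = top_of_set {1/2..1}"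
      unfolding subtopology_subtopology by (intro arg_cong[where f="subtopology euclidean"]) auto
    have "continuous_map (top_of_set {1/2..1}) ?T (\<lambda>u. t + (2-2*u)*(s-t))"
    proof -
      have "t + (2-2*u)*(s-t) \<in> {0..1}" if "u \<in> {1/2..1}" for u
        using seg01(1)[OF t s, of "2-2*u"] that by simp
      then show ?thesis by (auto simp: continuous_map_in_subtopology intro!: continuous_intros)
    qed
    then have "continuous_map (top_of_set {1/2..1}) X (q \<circ> (\<lambda>u. t + (2-2*u)*(s-t)))"
      using q unfolding pathin_def by (rule continuous_map_compose)
    then show "continuous_map (subtopology ?T {x \<in> topspace ?T. 1/2 \<le> x}) X (\<lambda>u. q (t + (2-2*u)*(s-t)))"
      unfolding e2 by (simp add: o_def)
    show "p (t + 2*x*(s-t)) = q (t + (2-2*x)*(s-t))" if "x \<in> topspace ?T" "x = 1/2" for x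
    proof -
      from that(2) show "p (t + 2*x*(s-t)) = q (t + (2-2*x)*(s-t))"
        using eqs by (simp add: algebra_simps)
    qed
  qed
  then show ?thesis unfolding pathin_def loopL_def by simp
qed

lemma cont_at:
  assumes p: "pathin X p" and U: "openin X U" and t: "t \<in> {0..1}" and pt: "p t \<in> U"
  shows "\<exists>e>0. \<forall>r\<in>{0..1}. \<bar>r - t\<bar> < e \<longrightarrow> p r \<in> U"
proof -
  have "openin (top_of_set {0..1}) {x \<in> topspace (top_of_set {0..1::real}). p x \<in> U}"
    using p U unfolding pathin_def by (rule openin_continuous_map_preimage)
  then have "openin (top_of_set {0..1}) {x \<in> {0..1::real}. p x \<in> U}" by simp
  then obtain e where "e > 0" "\<forall>x'\<in>{0..1}. dist x' t < e \<longrightarrow> x' \<in> {x \<in> {0..1::real}. p x \<in> U}"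
    using t pt unfolding openin_euclidean_subtopology_iff by blast
  then show ?thesis by (auto simp: dist_real_def)
qed

lemma local_triv:
  assumes p: "pathin X p" and q: "pathin X q" and tA: "t \<in> A" and A01: "A \<subseteq> {0..1}"
    and eqA: "\<forall>x\<in>A. p x = q x" and naw: "p t \<notin> aw X" and ptop: "p t \<in> topspace X"
  shows "\<exists>d>0. \<forall>s\<in>A. s \<noteq> t \<and> \<bar>s - t\<bar> < d \<longrightarrow> trivial_loop X (p t) (loopL p q t s)"
proof (rule ccontr)
  assume "\<not> ?thesis"
  then have H: "\<forall>d>0. \<exists>s\<in>A. s \<noteq> t \<and> \<bar>s - t\<bar> < d \<and> \<not> trivial_loop X (p t) (loopL p q t s)"
    by blast
  have "\<forall>n::nat. \<exists>s. s \<in> A \<and> s \<noteq> t \<and> \<bar>s - t\<bar> < inverse (real (Suc n)) \<and> \<not> trivial_loop X (p t) (loopL p q t s)"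
  proof
    fix n :: nat
    have "inverse (real (Suc n)) > 0" by simp
    then show "\<exists>s. s \<in> A \<and> s \<noteq> t \<and> \<bar>s - t\<bar> < inverse (real (Suc n)) \<and> \<not> trivial_loop X (p t) (loopL p q t s)"
      using H by blast
  qed
  then obtain sq where sq: "\<And>n. sq n \<in> A" "\<And>n. sq n \<noteq> t" "\<And>n. \<bar>sq n - t\<bar> < inverse (real (Suc n))"
      "\<And>n. \<not> trivial_loop X (p t) (loopL p q t (sq n))"
    by metis
  have t01: "t \<in> {0..1}" using tA A01 by auto
  have sq01: "sq n \<in> {0..1}" for n using sq(1)[of n] A01 by blast
  have "p t \<in> aw X"
    unfolding aw_def
  proof (intro CollectI conjI exI[where x="\<lambda>n. loopL p q t (sq n)"] allI impI ptop)
    fix n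
    show "pathin X (loopL p q t (sq n))"
      using loop_path[OF p q t01 sq01] eqA sq(1) by blast
    show "loopL p q t (sq n) 0 = p t" by (simp add: loopL_def)
    show "loopL p q t (sq n) 1 = p t" using eqA tA by (simp add: loopL_def)
    show "\<not> trivial_loop X (p t) (loopL p q t (sq n))" by (rule sq(4))
  next
    fix U assume U: "openin X U \<and> p t \<in> U"
    obtain e1 where e1: "e1 > 0" "\<forall>r\<in>{0..1}. \<bar>r - t\<bar> < e1 \<longrightarrow> p r \<in> U"
      using cont_at[OF p _ t01] U by blast
    have "q t \<in> U" using U eqA tA by auto
    then obtain e2 where e2: "e2 > 0" "\<forall>r\<in>{0..1}. \<bar>r - t\<bar> < e2 \<longrightarrow> q r \<in> U"
      using cont_at[OF q _ t01] U by blast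
    define e where "e = min e1 e2"
    have "e > 0" using e1 e2 by (simp add: e_def)
    then obtain N where N: "inverse (real (Suc N)) < e" using reals_Archimedean by blast
    show "\<forall>\<^sub>F n in sequentially. loopL p q t (sq n) ` {0..1} \<subseteq> U"
      unfolding eventually_sequentially
    proof (intro exI allI impI)
      fix n assume "N \<le> n"
      then have "inverse (real (Suc n)) \<le> inverse (real (Suc N))"
        by (simp add: le_imp_inverse_le)
      then have sn: "\<bar>sq n - t\<bar> < e" using sq(3)[of n] N by linarith
      show "loopL p q t (sq n) ` {0..1} \<subseteq> U"
      proof
        fix y assume "y \<in> loopL p q t (sq n) ` {0..1}"
        then obtain u where u: "u \<in> {0..1}" and y: "y = loopL p q t (sq n) u" by blast
        show "y \<in> U"
        proof (cases "u \<le> 1/2")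
          case True
          have w: "2*u \<in> {0..1}" using u True by auto
          have "t + (2*u)*(sq n - t) \<in> {0..1}" "\<bar>t + (2*u)*(sq n - t) - t\<bar> \<le> \<bar>sq n - t\<bar>"
            using seg01[OF t01 sq01 w] by auto
          then have "p (t + (2*u)*(sq n - t)) \<in> U" using e1 sn unfolding e_def by auto
          then show ?thesis using y True unfolding loopL_def by (simp add: mult.assoc)
        next
          case False
          have w: "2-2*u \<in> {0..1}" using u False by auto
          have "t + (2-2*u)*(sq n - t) \<in> {0..1}" "\<bar>t + (2-2*u)*(sq n - t) - t\<bar> \<le> \<bar>sq n - t\<bar>"
            using seg01[OF t01 sq01 w] by auto
          then have "q (t + (2-2*u)*(sq n - t)) \<in> U" using e2 sn unfolding e_def by auto
          then show ?thesis using y False unfolding loopL_def by simp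
        qed
      qed
    qed
  qed
  then show False using naw by blast
qed

lemma gap_comp:
  fixes A :: "real set"
  assumes mb: "m < b" and mA: "m \<in> A" and bA: "b \<in> A" and m0: "0 \<le> m" and b1: "b \<le> 1"
    and gap: "\<forall>y\<in>A. \<not> (m < y \<and> y < b)"
  shows "{m<..<b} \<in> components ({0..1} - A)"
  unfolding in_components_maximal
proof (intro conjI allI impI)
  show "{m<..<b} \<noteq> {}" using mb by auto
  show "{m<..<b} \<subseteq> {0..1} - A" using m0 b1 gap by auto
  show "connected {m<..<b}" by simp
  fix D assume D: "D \<noteq> {} \<and> {m<..<b} \<subseteq> D \<and> D \<subseteq> {0..1} - A \<and> connected D"
  then have "is_interval D" using is_interval_connected_1 by blast
  then have iD: "\<forall>a\<in>D. \<forall>b\<in>D. \<forall>x. a \<le> x \<and> x \<le> b \<longrightarrow> x \<in> D" unfolding is_interval_1 .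
  have mz: "m \<le> (m+b)/2" "(m+b)/2 \<le> b" using mb by auto
  have "(m+b)/2 \<in> {m<..<b}" using mb by auto
  then have z: "(m+b)/2 \<in> D" using D by blast
  have "D \<subseteq> {m<..<b}"
  proof
    fix y assume y: "y \<in> D"
    have "\<not> y \<le> m"
    proof
      assume "y \<le> m"
      then have "m \<in> D" using iD y z mz by blast
      then show False using D mA by auto
    qed
    moreover have "\<not> b \<le> y"
    proof
      assume "b \<le> y"
      then have "b \<in> D" using iD y z mz by blast
      then show False using D bA by auto
    qed
    ultimately show "y \<in> {m<..<b}" by auto
  qed
  then show "D = {m<..<b}" using D by auto
qed

theorem mainTheorem11:
  fixes X :: "'a topology" and \<alpha> \<beta> :: "real \<Rightarrow> 'a" and A :: "real set"
  assumes "pathin X \<alpha>" and "pathin X \<beta>"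
    and "homotopy_cut_set X 0 1 \<alpha> \<beta> A"
    and "\<alpha> ` A \<subseteq> topspace X - aw X"
  shows "path_homotopic_on X 0 1 \<alpha> \<beta>"
proof -
  note p = assms(1) and q = assms(2)
  have A01: "A \<subseteq> {0..1}" and clA: "closed A" and A0: "0 \<in> A" and A1: "1 \<in> A"
    and eqA: "\<forall>x\<in>A. \<alpha> x = \<beta> x"
    and gaps: "\<And>a b. a < b \<Longrightarrow> {a<..<b} \<in> components ({0..1} - A) \<Longrightarrow> path_homotopic_on X a b \<alpha> \<beta>"
    using assms(3) unfolding homotopy_cut_set_def by blast+
  have loc: "\<exists>d>0. \<forall>s\<in>A. s \<noteq> t \<and> \<bar>s - t\<bar> < d \<longrightarrow> path_homotopic_on X (min t s) (max t s) \<alpha> \<beta>"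
    if tA: "t \<in> A" for t
  proof -
    have "\<alpha> t \<notin> aw X" "\<alpha> t \<in> topspace X" using assms(4) tA by auto
    then obtain d where d: "d > 0" "\<forall>s\<in>A. s \<noteq> t \<and> \<bar>s - t\<bar> < d \<longrightarrow> trivial_loop X (\<alpha> t) (loopL \<alpha> \<beta> t s)"
      using local_triv[OF p q tA A01 eqA] by blast
    show ?thesis
    proof (intro exI conjI ballI impI)
      fix s assume s: "s \<in> A" "s \<noteq> t \<and> \<bar>s - t\<bar> < d"
      show "path_homotopic_on X (min t s) (max t s) \<alpha> \<beta>"
        by (rule loop_triv) (use s d tA A01 eqA in auto)
    qed (use d in auto)
  qed
  define S where "S = {s \<in> A. path_homotopic_on X 0 s \<alpha> \<beta>}"
  have "path_homotopic_on X 0 0 \<alpha> \<beta>"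
    unfolding path_homotopic_on_def
  proof (rule homotopic_with_equal)
    have "continuous_map (subtopology (top_of_set {0..1}) {0..0}) X \<alpha>"
      using p unfolding pathin_def by (rule continuous_map_from_subtopology)
    then show "continuous_map (top_of_set {0..0}) X \<alpha>"
      by (simp add: subtopology_subtopology)
    show "\<alpha> 0 = \<alpha> 0 \<and> \<alpha> 0 = \<alpha> 0" by simp
    show "\<beta> 0 = \<alpha> 0 \<and> \<beta> 0 = \<alpha> 0" using eqA A0 by simp
    show "\<And>x. x \<in> topspace (top_of_set {0..0::real}) \<Longrightarrow> \<alpha> x = \<beta> x" using eqA A0 by simp
  qed
  then have S0: "0 \<in> S" unfolding S_def using A0 by simp
  have SA: "S \<subseteq> A" unfolding S_def by auto
  have bdd: "bdd_above S" unfolding bdd_above_def using SA A01 by (intro exI[where x=1]) auto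
  define m where "m = Sup S"
  have m0: "0 \<le> m" unfolding m_def using S0 bdd by (rule cSup_upper)
  have m1: "m \<le> 1" unfolding m_def using S0 SA A01 by (intro cSup_least) auto
  have "m \<in> closure S" unfolding m_def using S0 bdd by (intro closure_contains_Sup) auto
  then have mA: "m \<in> A" using closure_mono[OF SA] clA closure_closed by blast
  obtain d where d: "d > 0" "\<forall>s\<in>A. s \<noteq> m \<and> \<bar>s - m\<bar> < d \<longrightarrow> path_homotopic_on X (min m s) (max m s) \<alpha> \<beta>"
    using loc[OF mA] by blast
  have mS: "m \<in> S"
  proof (rule ccontr)
    assume nm: "m \<notin> S"
    have "m - d < Sup S" using d m_def by simp
    then obtain s where s: "s \<in> S" "m - d < s" using S0 by (auto elim: less_cSupE)
    have sm: "s \<le> m" unfolding m_def using s(1) bdd by (rule cSup_upper)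
    have "s \<noteq> m" using s nm by auto
    then have "path_homotopic_on X s m \<alpha> \<beta>" using d s sm SA by (auto simp: min_def max_def)
    moreover have "path_homotopic_on X 0 s \<alpha> \<beta>" "0 \<le> s" using s SA A01 unfolding S_def by auto
    ultimately have "path_homotopic_on X 0 m \<alpha> \<beta>" using glue sm by blast
    then show False using nm mA unfolding S_def by auto
  qed
  then have phm: "path_homotopic_on X 0 m \<alpha> \<beta>" unfolding S_def by auto
  have "m = 1"
  proof (rule ccontr)
    assume "m \<noteq> 1"
    then have m1': "m < 1" using m1 by simp
    show False
    proof (cases "\<exists>s\<in>A. m < s \<and> s < m + d")
      case True
      then obtain s where s: "s \<in> A" "m < s" "s < m + d" by blast
      then have "path_homotopic_on X m s \<alpha> \<beta>" using d by (auto simp: min_def max_def)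
      then have "path_homotopic_on X 0 s \<alpha> \<beta>" using glue[OF m0 _ phm] s by auto
      then have "s \<in> S" using s unfolding S_def by auto
      then have "s \<le> m" unfolding m_def using bdd by (rule cSup_upper)
      then show False using s by simp
    next
      case False
      define B where "B = A \<inter> {m<..}"
      have B1: "1 \<in> B" using A1 m1' unfolding B_def by auto
      have bddB: "bdd_below B" unfolding bdd_below_def B_def by (intro exI[where x=m]) auto
      define b where "b = Inf B"
      have bge: "m + d \<le> b" unfolding b_def
        using B1 False by (intro cInf_greatest) (auto simp: B_def not_less)
      have b1: "b \<le> 1" unfolding b_def using B1 bddB by (rule cInf_lower)
      have "b \<in> closure B" unfolding b_def using B1 bddB by (intro closure_contains_Inf) auto
      then have bA: "b \<in> A" using closure_mono[of B A] clA closure_closed unfolding B_def by blast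
      have mb: "m < b" using bge d by simp
      have gap: "\<forall>y\<in>A. \<not> (m < y \<and> y < b)"
      proof (intro ballI notI)
        fix y assume "y \<in> A" "m < y \<and> y < b"
        then have "y \<in> B" unfolding B_def by auto
        then have "b \<le> y" unfolding b_def using bddB by (rule cInf_lower)
        then show False using \<open>m < y \<and> y < b\<close> by simp
      qed
      have "path_homotopic_on X m b \<alpha> \<beta>"
        using gaps[OF mb gap_comp[OF mb mA bA m0 b1 gap]] .
      then have "path_homotopic_on X 0 b \<alpha> \<beta>" using glue[OF m0 _ phm] mb by auto
      then have "b \<in> S" using bA unfolding S_def by auto
      then have "b \<le> m" unfolding m_def using bdd by (rule cSup_upper)
      then show False using mb by simp
    qed
  qed
  then show ?thesis using phm by simp
qed

end
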